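(* (Euler's Formula for Resistance Function II.) Let $\Gamma$ be a metrized graph whose edges $e_i\in E(\Gamma)$ have end points $p_i,q_i$ and lengths $L_i$. For any $s,t\in V(\Gamma)$, $$r(s,t)=\frac14\sum_{e_i\in E(\Gamma)}\frac{1}{L_i}\Big[r(p_i,s)-r(q_i,s)-r(p_i,t)+r(q_i,t)\Big]^2.$$
   Context: A metrized graph $\Gamma$ is a finite connected graph (multiple edges and self-loops allowed) in which each edge is identified with a closed line segment of positive length; $V(\Gamma)$ is a chosen finite vertex set and $E(\Gamma)$ the resulting edge set. $\Gamma$ is regarded as a resistive electric circuit in which each edge is a resistor whose resistance equals its length, and $r(x,y)$ denotes the effective resistance between $x$ and $y$. *)

theory Defs
  imports Complex_Main
begin

text \<open>A metrized graph, presented combinatorially: a finite nonempty vertex set V,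
 a finite set E of edge labels, each edge e having end points p e, q e in V
 (p e = q e allowed: self-loops; several edges may share end points: multiple edges)
 and length L e > 0. The graph is connected.\<close>

definition adj :: "'e set \<Rightarrow> ('e \<Rightarrow> 'v) \<Rightarrow> ('e \<Rightarrow> 'v) \<Rightarrow> ('v \<times> 'v) set" where
  "adj E p q = {(p e, q e) | e. e \<in> E} \<union> {(q e, p e) | e. e \<in> E}"

definition metrized_graph ::
  "'v set \<Rightarrow> 'e set \<Rightarrow> ('e \<Rightarrow> 'v) \<Rightarrow> ('e \<Rightarrow> 'v) \<Rightarrow> ('e \<Rightarrow> real) \<Rightarrow> bool" where
  "metrized_graph V E p q L \<longleftrightarrow>
     finite V \<and> V \<noteq> {} \<and> finite E \<and>
     (\<forall>e\<in>E. p e \<in> V \<and> q e \<in> V \<and> L e > 0) \<and>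
     (\<forall>x\<in>V. \<forall>y\<in>V. (x, y) \<in> (adj E p q)\<^sup>*)"

text \<open>Net current flowing out of vertex x for the potential f, each edge being a
 resistor of resistance L e (Ohm's law); self-loops contribute nothing.\<close>
definition net_current ::
  "'e set \<Rightarrow> ('e \<Rightarrow> 'v) \<Rightarrow> ('e \<Rightarrow> 'v) \<Rightarrow> ('e \<Rightarrow> real) \<Rightarrow> ('v \<Rightarrow> real) \<Rightarrow> 'v \<Rightarrow> real" where
  "net_current E p q L f x =
     (\<Sum>e\<in>{e\<in>E. p e = x}. (f x - f (q e)) / L e) +
     (\<Sum>e\<in>{e\<in>E. q e = x}. (f x - f (p e)) / L e)"

text \<open>Effective resistance r(s,t): inject a unit current at s and extract it at t
 (Kirchhoff's current law at every vertex); r(s,t) is the resulting potential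
 difference f s - f t.\<close>
definition eff_res ::
  "'v set \<Rightarrow> 'e set \<Rightarrow> ('e \<Rightarrow> 'v) \<Rightarrow> ('e \<Rightarrow> 'v) \<Rightarrow> ('e \<Rightarrow> real) \<Rightarrow> 'v \<Rightarrow> 'v \<Rightarrow> real" where
  "eff_res V E p q L s t =
     (THE r. \<exists>f. (\<forall>x\<in>V. net_current E p q L f x =
                      (if x = s then 1 else 0) - (if x = t then 1 else 0))
                \<and> r = f s - f t)"

end

theory Submission
  imports Defs "HOL-Library.Function_Algebras"
begin

lemma sum_fun_apply': "(\<Sum>i\<in>A. F i) x = (\<Sum>i\<in>A. F i x)"
  by (induct A rule: infinite_finite_induct) auto

lemma swap_group:
  fixes g :: "'v \<Rightarrow> real" and h :: "'e \<Rightarrow> real"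
  assumes "finite V" "finite E" "\<forall>e\<in>E. p e \<in> V"
  shows "(\<Sum>x\<in>V. g x * (\<Sum>e\<in>{e\<in>E. p e = x}. h e)) = (\<Sum>e\<in>E. g (p e) * h e)"
proof -
  have "(\<Sum>x\<in>V. g x * (\<Sum>e\<in>{e\<in>E. p e = x}. h e)) = (\<Sum>x\<in>V. (\<Sum>e\<in>{e\<in>E. p e = x}. g (p e) * h e))"
    unfolding sum_distrib_left by (intro sum.cong refl) auto
  also have "\<dots> = (\<Sum>e\<in>E. g (p e) * h e)"
    using sum.group[of E V p "\<lambda>e. g (p e) * h e"] assms by auto
  finally show ?thesis .
qed

lemma aux1: "(a::real) * (b - c) / l + d * (c - b) / l = (a - d) * (b - c) / l"
  by (cases "l = 0") (simp_all add: field_simps)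

lemma aux2: "((a::real) + b - (c + d)) / l = (a - c) / l + (b - d) / l"
  by (cases "l = 0") (simp_all add: field_simps)

lemma green:
  assumes "finite V" "finite E" "\<forall>e\<in>E. p e \<in> V \<and> q e \<in> V"
  shows "(\<Sum>x\<in>V. g x * net_current E p q L f x) =
     (\<Sum>e\<in>E. (g (p e) - g (q e)) * (f (p e) - f (q e)) / L e)"
proof -
  have a: "(\<Sum>x\<in>V. g x * (\<Sum>e\<in>{e\<in>E. p e = x}. (f x - f (q e)) / L e))
       = (\<Sum>e\<in>E. g (p e) * ((f (p e) - f (q e)) / L e))"
  proof -
    have "(\<Sum>x\<in>V. g x * (\<Sum>e\<in>{e\<in>E. p e = x}. (f x - f (q e)) / L e))
        = (\<Sum>x\<in>V. g x * (\<Sum>e\<in>{e\<in>E. p e = x}. (f (p e) - f (q e)) / L e))"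
      by (auto intro!: sum.cong)
    also have "\<dots> = (\<Sum>e\<in>E. g (p e) * ((f (p e) - f (q e)) / L e))"
      using swap_group[of V E p g "\<lambda>e. (f (p e) - f (q e)) / L e"] assms by auto
    finally show ?thesis .
  qed
  have b: "(\<Sum>x\<in>V. g x * (\<Sum>e\<in>{e\<in>E. q e = x}. (f x - f (p e)) / L e))
       = (\<Sum>e\<in>E. g (q e) * ((f (q e) - f (p e)) / L e))"
  proof -
    have "(\<Sum>x\<in>V. g x * (\<Sum>e\<in>{e\<in>E. q e = x}. (f x - f (p e)) / L e))
        = (\<Sum>x\<in>V. g x * (\<Sum>e\<in>{e\<in>E. q e = x}. (f (q e) - f (p e)) / L e))"
      by (auto intro!: sum.cong)
    also have "\<dots> = (\<Sum>e\<in>E. g (q e) * ((f (q e) - f (p e)) / L e))"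
      using swap_group[of V E q g "\<lambda>e. (f (q e) - f (p e)) / L e"] assms by auto
    finally show ?thesis .
  qed
  have "(\<Sum>x\<in>V. g x * net_current E p q L f x) =
     (\<Sum>x\<in>V. g x * (\<Sum>e\<in>{e\<in>E. p e = x}. (f x - f (q e)) / L e)) +
     (\<Sum>x\<in>V. g x * (\<Sum>e\<in>{e\<in>E. q e = x}. (f x - f (p e)) / L e))"
    unfolding net_current_def by (simp add: distrib_left sum.distrib)
  also have "\<dots> = (\<Sum>e\<in>E. (g (p e) - g (q e)) * (f (p e) - f (q e)) / L e)"
    unfolding a b sum.distrib[symmetric] by (intro sum.cong refl) (simp add: aux1)
  finally show ?thesis .
qed

lemma nc_diff: "net_current E p q L (\<lambda>z. f z - g z) x = net_current E p q L f x - net_current E p q L g x"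
  unfolding net_current_def by (simp add: sum_subtractf diff_divide_distrib)

lemma nc_add: "net_current E p q L (\<lambda>z. f z + g z) x = net_current E p q L f x + net_current E p q L g x"
  unfolding net_current_def by (simp add: sum.distrib aux2)

lemma nc_scale: "net_current E p q L (\<lambda>z. c * f z) x = c * net_current E p q L f x"
  unfolding net_current_def by (simp add: sum_distrib_left right_diff_distrib distrib_left)

lemma sum_delta_mult:
  assumes "finite A"
  shows "(\<Sum>v\<in>A. (g v::real) * (if x = v then 1 else 0)) = (if x \<in> A then g x else 0)"
proof -
  have "(\<Sum>v\<in>A. (g v::real) * (if x = v then 1 else 0)) = (\<Sum>v\<in>A. if x = v then g x else 0)"
    by (rule sum.cong) auto
  also have "\<dots> = (if x \<in> A then g x else 0)" using assms by simp
  finally show ?thesis .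
qed

lemma nc_sum_zero:
  assumes "finite V" "finite E" "\<forall>e\<in>E. p e \<in> V \<and> q e \<in> V"
  shows "(\<Sum>x\<in>V. net_current E p q L f x) = 0"
  using green[OF assms, of "\<lambda>_. 1" L f] by simp

lemma mg_facts:
  assumes "metrized_graph V E p q L"
  shows "finite V" "finite E" "\<forall>e\<in>E. p e \<in> V \<and> q e \<in> V" "V \<noteq> {}"
    "\<And>e. e \<in> E \<Longrightarrow> L e > 0"
    "\<And>x y. x \<in> V \<Longrightarrow> y \<in> V \<Longrightarrow> (x, y) \<in> (adj E p q)\<^sup>*"
  using assms unfolding metrized_graph_def by auto

lemma harmonic_const:
  assumes G: "metrized_graph V E p q L" and h: "\<forall>x\<in>V. net_current E p q L f x = 0"
    and xy: "x \<in> V" "y \<in> V"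
  shows "f x = f y"
proof -
  note F = mg_facts[OF G]
  have "(\<Sum>e\<in>E. (f (p e) - f (q e)) * (f (p e) - f (q e)) / L e) = 0"
    using green[OF F(1,2,3), of f L f] h by simp
  moreover have nn: "\<forall>e\<in>E. 0 \<le> (f (p e) - f (q e)) * (f (p e) - f (q e)) / L e"
  proof
    fix e assume "e \<in> E"
    then show "0 \<le> (f (p e) - f (q e)) * (f (p e) - f (q e)) / L e"
      by (intro divide_nonneg_pos) (simp_all add: F(5))
  qed
  ultimately have z0: "\<forall>e\<in>E. (f (p e) - f (q e)) * (f (p e) - f (q e)) / L e = 0"
    by (metis (no_types, lifting) sum_nonneg_eq_0_iff[OF F(2)])
  have eq: "\<forall>e\<in>E. f (p e) = f (q e)"
  proof
    fix e assume e: "e \<in> E"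
    with z0 have "(f (p e) - f (q e)) * (f (p e) - f (q e)) / L e = 0" by blast
    moreover have "L e \<noteq> 0" using F(5)[OF e] by simp
    ultimately show "f (p e) = f (q e)" by simp
  qed
  have "(x, y) \<in> (adj E p q)\<^sup>*" using F(6) xy by blast
  then show ?thesis
  proof (induct rule: rtrancl_induct)
    case base then show ?case by simp
  next
    case (step y z)
    then show ?case using eq unfolding adj_def by auto
  qed
qed

lemma exists_sol:
  fixes V :: "'v set"
  assumes G: "metrized_graph V E p q L" and bs: "(\<Sum>x\<in>V. b x) = 0"
  shows "\<exists>f. \<forall>x\<in>V. net_current E p q L f x = b x"
proof -
  note F = mg_facts[OF G]
  obtain t0 where t0: "t0 \<in> V" using F(4) by blast
  define sc where "sc = (\<lambda>(c::real) (f::'v\<Rightarrow>real) (x::'v). c * f x)"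
  interpret fv: vector_space sc
    by unfold_locales (auto simp: sc_def plus_fun_def algebra_simps fun_eq_iff)
  define T where "T = (\<lambda>f x. if x \<in> V then net_current E p q L f x + (if x = t0 then f t0 else 0) else 0)"
  interpret lin: Vector_Spaces.linear sc sc T
    by unfold_locales (auto simp: T_def sc_def plus_fun_def fun_eq_iff nc_add nc_scale algebra_simps)
  define \<delta> where "\<delta> = (\<lambda>(v::'v) (x::'v). if x = v then 1::real else 0)"
  define D where "D = \<delta> ` V"
  define Sp where "Sp = {f::'v\<Rightarrow>real. \<forall>x. x \<notin> V \<longrightarrow> f x = 0}"
  have finD: "finite D" using F(1) by (simp add: D_def)
  have repr: "f = (\<Sum>v\<in>V. sc (f v) (\<delta> v))" if "f \<in> Sp" for f
  proof (rule ext)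
    fix x
    show "f x = (\<Sum>v\<in>V. sc (f v) (\<delta> v)) x"
      using that F(1) by (auto simp: sum_fun_apply' sc_def \<delta>_def Sp_def sum_delta_mult)
  qed
  have SpD: "Sp \<subseteq> fv.span D"
  proof
    fix f assume "f \<in> Sp"
    then have "f = (\<Sum>v\<in>V. sc (f v) (\<delta> v))" by (rule repr)
    also have "\<dots> \<in> fv.span D"
      by (intro fv.span_sum fv.span_scale fv.span_base) (auto simp: D_def)
    finally show "f \<in> fv.span D" .
  qed
  have DSp: "fv.span D \<subseteq> Sp"
  proof (rule fv.span_minimal)
    show "D \<subseteq> Sp" by (auto simp: D_def Sp_def \<delta>_def)
    show "fv.subspace Sp" unfolding fv.subspace_def
      by (auto simp: Sp_def sc_def plus_fun_def)
  qed
  have TSp: "T f \<in> Sp" for f by (auto simp: T_def Sp_def)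
  have Tinj: "f = 0" if fS: "f \<in> Sp" and Tf: "T f = 0" for f
  proof -
    have eqs: "net_current E p q L f x + (if x = t0 then f t0 else 0) = 0" if "x \<in> V" for x
      using fun_cong[OF Tf, of x] that by (simp add: T_def)
    have "(\<Sum>x\<in>V. net_current E p q L f x + (if x = t0 then f t0 else 0)) = 0"
      using eqs by simp
    then have "f t0 = 0" using nc_sum_zero[OF F(1,2,3), of L f] t0 F(1)
      by (simp add: sum.distrib)
    have "\<forall>x\<in>V. net_current E p q L f x = 0"
    proof
      fix x assume "x \<in> V"
      from eqs[OF this] \<open>f t0 = 0\<close> show "net_current E p q L f x = 0" by (simp split: if_splits)
    qed
    then have "\<forall>x\<in>V. f x = f t0" using harmonic_const[OF G] t0 by blast
    with \<open>f t0 = 0\<close> fS show "f = 0" by (auto simp: Sp_def fun_eq_iff)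
  qed
  have injT: "inj_on T (fv.span D)"
    unfolding lin.inj_on_iff_eq_0[OF fv.subspace_span] using Tinj DSp by blast
  have indD: "fv.independent D"
    unfolding fv.independent_explicit_module
  proof (intro allI impI)
    fix t u v
    assume ft: "finite t" and tD: "t \<subseteq> D" and s0: "(\<Sum>v\<in>t. sc (u v) v) = 0" and vt: "v \<in> t"
    obtain w where w: "w \<in> V" "v = \<delta> w" using vt tD by (auto simp: D_def)
    have "0 = (\<Sum>v\<in>t. sc (u v) v) w" using s0 by simp
    also have "\<dots> = (\<Sum>v'\<in>t. u v' * (if v' = v then 1 else 0))"
      unfolding sum_fun_apply' sc_def
    proof (intro sum.cong refl)
      fix v' assume "v' \<in> t"
      then obtain w' where w': "v' = \<delta> w'" using tD by (auto simp: D_def)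
      show "u v' * v' w = u v' * (if v' = v then 1 else 0)"
      proof (cases "w' = w")
        case True then show ?thesis using w w' by (simp add: \<delta>_def)
      next
        case False
        then have "v' \<noteq> v" using w w' by (auto simp: \<delta>_def fun_eq_iff)
        then show ?thesis using w w' False by (simp add: \<delta>_def)
      qed
    qed
    also have "\<dots> = u v" using ft vt by (simp add: if_distrib cong: if_cong)
    finally show "u v = 0" by simp
  qed
  have indTD: "fv.independent (T ` D)"
    by (rule lin.independent_injective_image[OF indD injT])
  have cardTD: "card (T ` D) = card D"
    by (rule card_image) (rule inj_on_subset[OF injT fv.span_superset])
  define b' where "b' = (\<lambda>x. if x \<in> V then b x else 0)"
  have b'S: "b' \<in> Sp" by (simp add: b'_def Sp_def)
  have "b' \<in> fv.span (T ` D)"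
  proof (rule ccontr)
    assume nb: "b' \<notin> fv.span (T ` D)"
    have ind2: "fv.independent (insert b' (T ` D))"
      by (rule fv.independent_insertI[OF nb indTD])
    have sub: "insert b' (T ` D) \<subseteq> fv.span D" using b'S SpD TSp by blast
    have "card (insert b' (T ` D)) \<le> card D"
      using fv.independent_span_bound[OF finD ind2 sub] by blast
    moreover have "b' \<notin> T ` D" using nb fv.span_superset by blast
    ultimately show False using cardTD finD by simp
  qed
  then obtain f where Tf: "T f = b'" unfolding lin.span_image by blast
  have eqs: "net_current E p q L f x + (if x = t0 then f t0 else 0) = b x" if "x \<in> V" for x
    using fun_cong[OF Tf, of x] that by (simp add: T_def b'_def)
  have "(\<Sum>x\<in>V. net_current E p q L f x + (if x = t0 then f t0 else 0)) = (\<Sum>x\<in>V. b x)"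
    using eqs by simp
  then have "f t0 = 0" using nc_sum_zero[OF F(1,2,3), of L f] t0 F(1) bs
    by (simp add: sum.distrib)
  have "\<forall>x\<in>V. net_current E p q L f x = b x"
  proof
    fix x assume "x \<in> V"
    from eqs[OF this] \<open>f t0 = 0\<close> show "net_current E p q L f x = b x" by (simp split: if_splits)
  qed
  then show ?thesis by blast
qed

lemma sum_bb:
  fixes V :: "'v set"
  assumes "finite V" "y \<in> V" "t \<in> V"
  shows "(\<Sum>z\<in>V. h z * ((if z = y then 1 else 0) - (if z = t then 1 else 0))) = (h y - h t :: real)"
proof -
  have "(\<Sum>z\<in>V. h z * ((if z = y then 1 else 0) - (if z = t then 1 else 0)))
      = (\<Sum>z\<in>V. h z * (if y = z then 1 else 0)) - (\<Sum>z\<in>V. h z * (if t = z then 1 else 0))"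
    by (simp add: right_diff_distrib sum_subtractf eq_commute)
  also have "\<dots> = h y - h t" using assms by (simp add: sum_delta_mult)
  finally show ?thesis .
qed

lemma sol_exists:
  fixes V :: "'v set"
  assumes G: "metrized_graph V E p q L" and "s \<in> V" "t \<in> V"
  shows "\<exists>f. \<forall>x\<in>V. net_current E p q L f x = (if x = s then 1 else 0) - (if x = t then 1 else 0)"
  by (rule exists_sol[OF G]) (use sum_bb[OF mg_facts(1)[OF G] assms(2,3), of "\<lambda>_. 1"] in simp)

lemma eff_res_eq:
  fixes V :: "'v set"
  assumes G: "metrized_graph V E p q L" and st: "s \<in> V" "t \<in> V"
    and sol: "\<forall>x\<in>V. net_current E p q L f x = (if x = s then 1 else 0) - (if x = t then 1 else 0)"
  shows "eff_res V E p q L s t = f s - f t"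
  unfolding eff_res_def
proof (rule the_equality)
  show "\<exists>f'. (\<forall>x\<in>V. net_current E p q L f' x = (if x = s then 1 else 0) - (if x = t then 1 else 0))
     \<and> f s - f t = f' s - f' t" using sol by blast
next
  fix r assume "\<exists>f'. (\<forall>x\<in>V. net_current E p q L f' x = (if x = s then 1 else 0) - (if x = t then 1 else 0))
     \<and> r = f' s - f' t"
  then obtain f' where f': "\<forall>x\<in>V. net_current E p q L f' x = (if x = s then 1 else 0) - (if x = t then 1 else 0)"
    and r: "r = f' s - f' t" by blast
  have "\<forall>x\<in>V. net_current E p q L (\<lambda>z. f' z - f z) x = 0"
    using f' sol by (simp add: nc_diff)
  then have "f' s - f s = f' t - f t"
    using harmonic_const[OF G _ st, of "\<lambda>z. f' z - f z"] by simp
  then show "r = f s - f t" using r by simp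
qed

theorem theorem3p9:
  fixes V :: "'v set" and E :: "'e set" and p q :: "'e \<Rightarrow> 'v" and L :: "'e \<Rightarrow> real"
  assumes "metrized_graph V E p q L" and "s \<in> V" and "t \<in> V"
  shows "eff_res V E p q L s t =
    1/4 * (\<Sum>e\<in>E. (1 / L e) *
      (eff_res V E p q L (p e) s - eff_res V E p q L (q e) s
       - eff_res V E p q L (p e) t + eff_res V E p q L (q e) t)^2)"
proof -
  note G = assms(1)
  note F = mg_facts[OF G]
  define bb where "bb = (\<lambda>y x. (if x = y then 1 else 0) - (if x = t then 1 else (0::real)))"
  define g where "g = (\<lambda>y. SOME f. \<forall>x\<in>V. net_current E p q L f x = bb y x)"
  have gsol: "\<forall>x\<in>V. net_current E p q L (g y) x = bb y x" if "y \<in> V" for y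
  proof -
    have "\<exists>f. \<forall>x\<in>V. net_current E p q L f x = bb y x"
      using sol_exists[OF G that assms(3)] unfolding bb_def .
    then show ?thesis unfolding g_def by (rule someI_ex)
  qed
  have sym: "g x y - g x t = g y x - g y t" if "x \<in> V" "y \<in> V" for x y
  proof -
    have "(\<Sum>z\<in>V. g x z * net_current E p q L (g y) z) = g x y - g x t"
      using gsol[OF that(2)] sum_bb[OF F(1) that(2) assms(3), of "g x"] by (simp add: bb_def)
    moreover have "(\<Sum>z\<in>V. g y z * net_current E p q L (g x) z) = g y x - g y t"
      using gsol[OF that(1)] sum_bb[OF F(1) that(1) assms(3), of "g y"] by (simp add: bb_def)
    moreover have "(\<Sum>z\<in>V. g x z * net_current E p q L (g y) z) = (\<Sum>z\<in>V. g y z * net_current E p q L (g x) z)"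
      unfolding green[OF F(1,2,3)] by (simp add: mult.commute)
    ultimately show ?thesis by simp
  qed
  have rr: "eff_res V E p q L a b = g a a - g b a - g a b + g b b" if "a \<in> V" "b \<in> V" for a b
  proof -
    have "\<forall>x\<in>V. net_current E p q L (\<lambda>z. g a z - g b z) x = (if x = a then 1 else 0) - (if x = b then 1 else 0)"
      using gsol[OF that(1)] gsol[OF that(2)] by (simp add: nc_diff bb_def)
    from eff_res_eq[OF G that this] show ?thesis by simp
  qed
  have rst: "eff_res V E p q L s t = g s s - g s t"
    using eff_res_eq[OF G assms(2,3) gsol[OF assms(2), unfolded bb_def]] by simp
  have edge: "(eff_res V E p q L (p e) s - eff_res V E p q L (q e) s
       - eff_res V E p q L (p e) t + eff_res V E p q L (q e) t) = -2 * (g s (p e) - g s (q e))"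
    if "e \<in> E" for e
  proof -
    have pe: "p e \<in> V" and qe: "q e \<in> V" using F(3) that by auto
    show ?thesis
      using rr[OF pe assms(2)] rr[OF qe assms(2)] rr[OF pe assms(3)] rr[OF qe assms(3)]
        sym[OF pe assms(2)] sym[OF qe assms(2)] sym[OF pe assms(3)] sym[OF qe assms(3)]
      by simp
  qed
  have "1/4 * (\<Sum>e\<in>E. (1 / L e) *
      (eff_res V E p q L (p e) s - eff_res V E p q L (q e) s
       - eff_res V E p q L (p e) t + eff_res V E p q L (q e) t)^2)
     = (\<Sum>e\<in>E. (g s (p e) - g s (q e)) * (g s (p e) - g s (q e)) / L e)"
    unfolding sum_distrib_left
  proof (intro sum.cong refl)
    fix e assume e: "e \<in> E"
    have "L e \<noteq> 0" using F(5)[OF e] by simp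
    then show "1/4 * ((1 / L e) *
      (eff_res V E p q L (p e) s - eff_res V E p q L (q e) s
       - eff_res V E p q L (p e) t + eff_res V E p q L (q e) t)^2)
     = (g s (p e) - g s (q e)) * (g s (p e) - g s (q e)) / L e"
      unfolding edge[OF e] by (simp add: power2_eq_square field_simps)
  qed
  also have "\<dots> = (\<Sum>z\<in>V. g s z * net_current E p q L (g s) z)"
    by (rule green[OF F(1,2,3), symmetric])
  also have "\<dots> = g s s - g s t"
    using gsol[OF assms(2)] sum_bb[OF F(1) assms(2,3), of "g s"] by (simp add: bb_def)
  finally show ?thesis using rst by simp
qed

end
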